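(* Let $p$ be an odd prime and fix $\alpha\in(0,\alpha_* )$, where $\alpha_*=(p-1)/p$. There is a constant $C_{p,\alpha}<\infty$ such that, for all sufficiently large $r$, the hitting time $\tau_\alpha=\inf\{t:S_t\ge\alpha r\}$ satisfies \[ \sup_{1\le s\le r}\mathbb E_s\tau_\alpha\le C_{p,\alpha}r\log r. \] Consequently, for a suitable $B_{p,\alpha}<\infty$, $\sup_{1\le s\le r}\mathbb P_s(\tau_\alpha>B_{p,\alpha}r\log r)\le\frac12$.
   Context: Let $(Y_t)$ be the one-column $p$-ary transvection walk on $\mathbb F_p^r\setminus\{0\}$: at each step choose an ordered pair of distinct $i,j\in[r]$ and $a\in\mathbb F_p$ uniformly at random and replace $Y_i$ by $Y_i+aY_j$. Let $S_t=|\{i:Y_t(i)\ne0\}|$; this is a birth–death chain on $\{1,\dots,r\}$ with birth probability $B_s=\frac{p-1}{p}\frac{s(r-s)}{r(r-1)}$ and death probability $D_s=\frac1p\frac{s(s-1)}{r(r-1)}$ from state $s$. $\mathbb E_s,\mathbb P_s$ refer to this chain started at $S_0=s$. *)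

theory Defs
  imports "HOL-Probability.Probability"
begin

definition birth :: "nat \<Rightarrow> nat \<Rightarrow> nat \<Rightarrow> real" where
  "birth p r s = ((real p - 1) / real p) * (real s * (real r - real s)) / (real r * (real r - 1))"

definition death :: "nat \<Rightarrow> nat \<Rightarrow> nat \<Rightarrow> real" where
  "death p r s = (1 / real p) * (real s * (real s - 1)) / (real r * (real r - 1))"

text \<open>One step of the birth-death chain: s+1 w.p. birth, s-1 w.p. death, stay otherwise.\<close>

definition step_pmf :: "nat \<Rightarrow> nat \<Rightarrow> nat \<Rightarrow> nat pmf" where
  "step_pmf p r s =
     bind_pmf (bernoulli_pmf (birth p r s)) (\<lambda>b.
       if b then return_pmf (s + 1)
       else bind_pmf (bernoulli_pmf (death p r s / (1 - birth p r s))) (\<lambda>d.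
         if d then return_pmf (s - 1) else return_pmf s))"

definition stopped_step :: "nat \<Rightarrow> nat \<Rightarrow> real \<Rightarrow> nat \<Rightarrow> nat pmf" where
  "stopped_step p r \<alpha> s = (if real s \<ge> \<alpha> * real r then return_pmf s else step_pmf p r s)"

fun stopped_dist :: "nat \<Rightarrow> nat \<Rightarrow> real \<Rightarrow> nat \<Rightarrow> nat \<Rightarrow> nat pmf" where
  "stopped_dist p r \<alpha> s 0 = return_pmf s"
| "stopped_dist p r \<alpha> s (Suc t) = bind_pmf (stopped_dist p r \<alpha> s t) (stopped_step p r \<alpha>)"

text \<open>P_s(\<tau>_\<alpha> > t), where \<tau>_\<alpha> = inf{t. S_t \<ge> \<alpha> r}.\<close>

definition tail_prob :: "nat \<Rightarrow> nat \<Rightarrow> real \<Rightarrow> nat \<Rightarrow> nat \<Rightarrow> real" where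
  "tail_prob p r \<alpha> s t = measure_pmf.prob (stopped_dist p r \<alpha> s t) {x. real x < \<alpha> * real r}"

text \<open>E_s \<tau>_\<alpha> = sum over t of P_s(\<tau>_\<alpha> > t), in ennreal (possibly infinite).\<close>

definition exp_hit :: "nat \<Rightarrow> nat \<Rightarrow> real \<Rightarrow> nat \<Rightarrow> ennreal" where
  "exp_hit p r \<alpha> s = (\<Sum>t. ennreal (tail_prob p r \<alpha> s t))"

end

theory Submission imports Defs "HOL-Analysis.Harmonic_Numbers" begin

lemma integral_bind_pmf_bdd:
  fixes f :: "'b \<Rightarrow> real"
  assumes "\<And>x. \<bar>f x\<bar> \<le> B"
  shows "measure_pmf.expectation (bind_pmf M N) f = measure_pmf.expectation M (\<lambda>x. measure_pmf.expectation (N x) f)"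
  unfolding measure_pmf_bind
  apply (rule integral_bind[where K="count_space UNIV" and B=B and B'=1])
  using assms apply (auto simp: space_subprob_algebra subprob_space_measure_pmf)
  done

lemma integrable_bdd:
  fixes f :: "'b \<Rightarrow> real"
  assumes "\<And>x. \<bar>f x\<bar> \<le> B"
  shows "integrable (measure_pmf M) f"
  by (rule measure_pmf.integrable_const_bound[where B=B]) (use assms in auto)

lemma exp_le_bdd:
  fixes f :: "'b \<Rightarrow> real"
  assumes "\<And>x. f x \<le> B" "\<And>x. \<bar>f x\<bar> \<le> B'"
  shows "measure_pmf.expectation M f \<le> B"
proof -
  have "measure_pmf.expectation M f \<le> measure_pmf.expectation M (\<lambda>_. B)"
    by (rule integral_mono) (use assms integrable_bdd[OF assms(2)] in auto)
  also have "\<dots> = B" by simp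
  finally show ?thesis .
qed

lemma abs_exp_le:
  fixes f :: "'b \<Rightarrow> real"
  assumes "\<And>x. \<bar>f x\<bar> \<le> B"
  shows "\<bar>measure_pmf.expectation M f\<bar> \<le> B"
proof -
  have "\<bar>measure_pmf.expectation M f\<bar> \<le> measure_pmf.expectation M (\<lambda>x. \<bar>f x\<bar>)"
    by (rule integral_abs_bound)
  also have "\<dots> \<le> B" by (rule exp_le_bdd[where B'=B]) (use assms in auto)
  finally show ?thesis .
qed

lemma harm_le_ln: "n \<ge> 1 \<Longrightarrow> harm n \<le> 1 + ln (real n)"
proof -
  assume "n \<ge> 1"
  then obtain m where m: "n = Suc m" by (cases n) auto
  have "harm (Suc m) - ln (real (Suc m)) \<le> harm (Suc 0) - ln (real (Suc 0))"
    using decseqD[OF decseq_harm_diff_ln, of 0 m] by simp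
  then show ?thesis by (simp add: m harm_def)
qed

definition Fh :: "nat \<Rightarrow> nat \<Rightarrow> real" where "Fh r x = harm (min x r - 1)"

lemma Fh_nonneg: "0 \<le> Fh r x" by (simp add: Fh_def harm_nonneg)
lemma Fh_le: "Fh r x \<le> harm r" unfolding Fh_def by (rule harm_mono) auto
lemma Fh_abs: "\<bar>Fh r x\<bar> \<le> harm r" using Fh_nonneg[of r x] Fh_le[of r x] by simp

context
  fixes p r :: nat and \<alpha> :: real
  assumes p2: "p \<ge> 2" and r3: "r \<ge> 3" and a0: "0 < \<alpha>" and a1: "\<alpha> < (real p - 1) / real p"
begin

lemma alpha_lt1: "\<alpha> < 1"
proof -
  have "\<alpha> * real p < real p - 1" using a1 p2 by (simp add: field_simps)
  then have "0 < (1 - \<alpha>) * real p" by (simp add: algebra_simps)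
  then show ?thesis using p2 by (simp add: zero_less_mult_iff)
qed

lemma x_lt_r: "real x < \<alpha> * real r \<Longrightarrow> x < r"
proof -
  assume "real x < \<alpha> * real r"
  also have "\<dots> \<le> real r" using alpha_lt1 r3 by (simp add: mult_left_le_one_le)
  finally show "x < r" by simp
qed

lemma bd_facts:
  assumes "1 \<le> x" "x < r"
  shows "0 \<le> birth p r x" "birth p r x < 1" "0 \<le> death p r x" "birth p r x + death p r x \<le> 1"
proof -
  define P where "P = real p"
  define R where "R = real r"
  define X where "X = real x"
  have P: "P \<ge> 2" using p2 by (simp add: P_def)
  have R: "R \<ge> 3" using r3 by (simp add: R_def)
  have X1: "X \<ge> 1" using assms by (simp add: X_def)
  have XR: "X \<le> R - 1" using assms by (simp add: X_def R_def)
  have den: "R * (R - 1) > 0" using R by simp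
  have bdef: "birth p r x = (P - 1) / P * (X * (R - X)) / (R * (R - 1))"
    by (simp add: birth_def P_def R_def X_def)
  have ddef: "death p r x = (1 / P) * (X * (X - 1)) / (R * (R - 1))"
    by (simp add: death_def P_def R_def X_def)
  show "0 \<le> birth p r x" unfolding bdef using P R X1 XR by (intro divide_nonneg_pos mult_nonneg_nonneg) auto
  show "0 \<le> death p r x" unfolding ddef using P R X1 XR by (intro divide_nonneg_pos mult_nonneg_nonneg) auto
  have h1: "X * (R - X) \<le> R * (R - 1)"
  proof -
    have "X * (R - X) \<le> (R - 1) * (R - X)" using XR X1 by (intro mult_right_mono) auto
    also have "\<dots> \<le> (R - 1) * R" using X1 R by (intro mult_left_mono) auto
    finally show ?thesis by (simp add: mult.commute)
  qed
  have "birth p r x = (P - 1) / P * ((X * (R - X)) / (R * (R - 1)))" unfolding bdef by simp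
  also have "\<dots> \<le> (P - 1) / P * 1"
    using h1 den P X1 XR by (intro mult_left_mono) (auto simp: divide_le_eq)
  also have "\<dots> < 1" using P by simp
  finally show "birth p r x < 1" .
  have h2: "(P - 1) * (X * (R - X)) + X * (X - 1) \<le> P * (R * (R - 1))"
  proof -
    have "X * (X - 1) * 1 \<le> X * (X - 1) * (P - 1)" using P X1 by (intro mult_left_mono) auto
    then have "(P - 1) * (X * (R - X)) + X * (X - 1) \<le> (P - 1) * (X * (R - X)) + (P - 1) * (X * (X - 1))"
      by (simp add: algebra_simps)
    also have "\<dots> = (P - 1) * (X * (R - 1))" by (simp add: algebra_simps)
    also have "\<dots> \<le> P * (R * (R - 1))"
      using P X1 XR R by (intro mult_mono) auto
    finally show ?thesis .
  qed
  have "birth p r x + death p r x = ((P - 1) * (X * (R - X)) + X * (X - 1)) / (P * (R * (R - 1)))"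
    unfolding bdef ddef using P den
    by (simp add: field_simps add_divide_distrib[symmetric])
  also have "\<dots> \<le> 1" using h2 P den by (simp add: divide_le_eq)
  finally show "birth p r x + death p r x \<le> 1" .
qed

lemma step_exp:
  fixes f :: "nat \<Rightarrow> real"
  assumes "1 \<le> x" "x < r" "\<And>y. \<bar>f y\<bar> \<le> M"
  shows "measure_pmf.expectation (step_pmf p r x) f
     = birth p r x * f (x+1) + death p r x * f (x-1) + (1 - birth p r x - death p r x) * f x"
proof -
  note bd = bd_facts[OF assms(1,2)]
  define b where "b = birth p r x"
  define d where "d = death p r x"
  have b0: "0 \<le> b" "b < 1" "0 \<le> d" "b + d \<le> 1" using bd by (auto simp: b_def d_def)
  have q: "0 \<le> d / (1 - b)" "d / (1 - b) \<le> 1" using b0 by (auto simp: divide_le_eq)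
  have "measure_pmf.expectation (step_pmf p r x) f
      = b * f (x+1) + (1 - b) * (d / (1 - b) * f (x - 1) + (1 - d / (1 - b)) * f x)"
    unfolding step_pmf_def b_def[symmetric] d_def[symmetric]
    using b0 q by (simp add: integral_bind_pmf_bdd[OF assms(3)])
  also have "\<dots> = b * f (x+1) + ((1 - b) * (d / (1 - b))) * f (x - 1) + ((1 - b) * (1 - d / (1 - b))) * f x"
    by (simp add: algebra_simps)
  also have "(1 - b) * (d / (1 - b)) = d" using b0 by (simp add: nonzero_mult_div_cancel_left)
  also have "(1 - b) * (1 - d / (1 - b)) = 1 - b - d" using b0 by (simp add: right_diff_distrib)
  
  finally show ?thesis by (simp add: b_def d_def)
qed

lemma c_pos: "0 < (real p - 1) - real p * \<alpha>"
  using a1 p2 by (simp add: field_simps)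

lemma drift:
  assumes "1 \<le> x" "real x < \<alpha> * real r"
  shows "birth p r x * (Fh r (x+1) - Fh r x) + death p r x * (Fh r (x-1) - Fh r x)
      \<ge> ((real p - 1) - real p * \<alpha>) / (real p * real r)"
proof -
  define P where "P = real p"
  define R where "R = real r"
  define X where "X = real x"
  define c where "c = (real p - 1) - real p * \<alpha>"
  have c0: "0 < c" using c_pos by (simp add: c_def)
  have P: "P \<ge> 2" using p2 by (simp add: P_def)
  have R: "R \<ge> 3" using r3 by (simp add: R_def)
  have xr: "x < r" using x_lt_r assms(2) .
  have X1: "X \<ge> 1" using assms by (simp add: X_def)
  have XR: "X \<le> R - 1" using xr by (simp add: X_def R_def)
  have Xa: "X < \<alpha> * R" using assms by (simp add: X_def R_def)
  have bdef: "birth p r x = (P - 1) / P * (X * (R - X)) / (R * (R - 1))"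
    by (simp add: birth_def P_def R_def X_def)
  have ddef: "death p r x = (1 / P) * (X * (X - 1)) / (R * (R - 1))"
    by (simp add: death_def P_def R_def X_def)
  have F1: "Fh r (x+1) - Fh r x = 1 / X"
  proof -
    obtain k where k: "x = Suc k" using assms(1) by (cases x) auto
    show ?thesis using xr by (simp add: Fh_def k X_def harm_Suc min_def divide_inverse)
  qed
  have cP: "c \<le> P - 1" using a0 P by (simp add: c_def P_def)
  have cbound: "c * R \<le> (P - 1) * R - P * X"
  proof -
    have "P * X \<le> P * (\<alpha> * R)" using Xa P by (intro mult_left_mono) auto
    then show ?thesis by (simp add: c_def P_def algebra_simps)
  qed
  show ?thesis
  proof (cases "x = 1")
    case True
    then have X: "X = 1" by (simp add: X_def)
    have "death p r x = 0" using True by (simp add: death_def)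
    then have "birth p r x * (Fh r (x+1) - Fh r x) + death p r x * (Fh r (x-1) - Fh r x) = (P - 1) / (P * R)"
      using F1 X R P by (simp add: bdef field_simps)
    moreover have "c / (P * R) \<le> (P - 1) / (P * R)" using cP P R by (intro divide_right_mono) auto
    ultimately show ?thesis by (simp add: c_def P_def R_def)
  next
    case False
    then obtain k where k: "x = Suc (Suc k)" using assms(1) by (cases x; cases "x - 1") auto
    have F2: "Fh r (x-1) - Fh r x = - 1 / (X - 1)"
      using xr by (simp add: Fh_def k X_def harm_Suc min_def divide_inverse)
    have X2: "X \<ge> 2" using k by (simp add: X_def)
    have "birth p r x * (Fh r (x+1) - Fh r x) + death p r x * (Fh r (x-1) - Fh r x)
        = ((P - 1) * R - P * X) / (P * R * (R - 1))"
    proof -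
      have e1: "birth p r x * (1 / X) = (P - 1) * (R - X) / (P * R * (R - 1))"
        using X2 R P by (simp add: bdef field_simps)
      have e2: "death p r x * (- 1 / (X - 1)) = - X / (P * R * (R - 1))"
      proof -
        have ne: "X - 1 \<noteq> 0" using X2 by simp
        have "death p r x * (- 1 / (X - 1)) = - (X * (X - 1)) / ((P * R * (R - 1)) * (X - 1))"
          by (simp add: ddef)
        also have "\<dots> = - X / (P * R * (R - 1))"
          using ne by (subst nonzero_mult_divide_mult_cancel_right[OF ne, symmetric]) simp
        finally show ?thesis .
      qed
      show ?thesis unfolding F1 F2 e1 e2 using R P
        by (simp add: field_simps add_divide_distrib[symmetric] diff_divide_distrib[symmetric])
    qed
    also have "\<dots> \<ge> c * R / (P * R * (R - 1))"
      using cbound P R by (intro divide_right_mono) auto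
    moreover have "c * R / (P * R * (R - 1)) = c / (P * (R - 1))" using R by simp
    moreover have "c / (P * (R - 1)) \<ge> c / (P * R)"
      using c0 P R by (intro divide_left_mono) auto
    ultimately show ?thesis by (simp add: c_def P_def R_def)
  qed
qed

lemma stopped_drift:
  assumes "1 \<le> x"
  shows "measure_pmf.expectation (stopped_step p r \<alpha> x) (Fh r)
    \<ge> Fh r x + ((real p - 1) - real p * \<alpha>) / (real p * real r) * indicator {y. real y < \<alpha> * real r} x"
proof (cases "real x \<ge> \<alpha> * real r")
  case True
  then show ?thesis by (simp add: stopped_step_def)
next
  case False
  then have xa: "real x < \<alpha> * real r" by simp
  have xr: "x < r" using x_lt_r xa .
  have "measure_pmf.expectation (stopped_step p r \<alpha> x) (Fh r)
     = birth p r x * Fh r (x+1) + death p r x * Fh r (x-1) + (1 - birth p r x - death p r x) * Fh r x"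
    using False by (simp add: stopped_step_def step_exp[OF assms xr Fh_abs])
  also have "\<dots> = Fh r x + (birth p r x * (Fh r (x+1) - Fh r x) + death p r x * (Fh r (x-1) - Fh r x))"
    by (simp add: algebra_simps)
  finally show ?thesis using drift[OF assms xa] xa by simp
qed

lemma set_stopped_step:
  assumes "1 \<le> x" "y \<in> set_pmf (stopped_step p r \<alpha> x)"
  shows "1 \<le> y"
proof (cases "real x \<ge> \<alpha> * real r")
  case True
  then show ?thesis using assms by (simp add: stopped_step_def)
next
  case False
  then have ys: "y \<in> set_pmf (step_pmf p r x)" using assms by (simp add: stopped_step_def)
  show ?thesis
  proof (cases "x = 1")
    case True
    have "death p r 1 = 0" by (simp add: death_def)
    then have "set_pmf (bernoulli_pmf (death p r x / (1 - birth p r x))) = {False}"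
      using True by (auto simp: set_pmf_iff)
    then show ?thesis using ys True by (auto simp: step_pmf_def split: if_splits)
  next
    case False
    then show ?thesis using ys assms(1) by (auto simp: step_pmf_def split: if_splits)
  qed
qed

lemma set_stopped_dist:
  assumes "1 \<le> s"
  shows "y \<in> set_pmf (stopped_dist p r \<alpha> s t) \<Longrightarrow> 1 \<le> y"
proof (induction t arbitrary: y)
  case 0
  then show ?case using assms by simp
next
  case (Suc t)
  then show ?case using set_stopped_step by auto
qed

abbreviation "ind \<equiv> (indicator {y. real y < \<alpha> * real r} :: nat \<Rightarrow> real)"

lemma tail_eq: "tail_prob p r \<alpha> s t = measure_pmf.expectation (stopped_dist p r \<alpha> s t) ind"
  by (simp add: tail_prob_def)

lemma phi_step:
  assumes "1 \<le> s"
  shows "measure_pmf.expectation (stopped_dist p r \<alpha> s (Suc t)) (Fh r)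
    \<ge> measure_pmf.expectation (stopped_dist p r \<alpha> s t) (Fh r)
      + ((real p - 1) - real p * \<alpha>) / (real p * real r) * tail_prob p r \<alpha> s t"
proof -
  define D where "D = stopped_dist p r \<alpha> s t"
  define d where "d = ((real p - 1) - real p * \<alpha>) / (real p * real r)"
  have d0: "0 \<le> d" using c_pos r3 p2 by (simp add: d_def)
  have "measure_pmf.expectation (stopped_dist p r \<alpha> s (Suc t)) (Fh r)
      = measure_pmf.expectation D (\<lambda>x. measure_pmf.expectation (stopped_step p r \<alpha> x) (Fh r))"
    by (simp add: D_def integral_bind_pmf_bdd[OF Fh_abs])
  also have "\<dots> \<ge> measure_pmf.expectation D (\<lambda>x. Fh r x + d * ind x)"
  proof (rule integral_mono_AE)
    show "integrable (measure_pmf D) (\<lambda>x. Fh r x + d * ind x)"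
    proof (rule integrable_bdd[where B="harm r + d"])
      fix x
      have "\<bar>Fh r x\<bar> \<le> harm r" by (rule Fh_abs)
      moreover have "0 \<le> ind x" "ind x \<le> 1" by (auto simp: indicator_def)
      moreover have "d * ind x \<le> d" using d0 \<open>ind x \<le> 1\<close> by (simp add: mult_left_le)
      moreover have "0 \<le> d * ind x" using d0 \<open>0 \<le> ind x\<close> by simp
      ultimately show "\<bar>Fh r x + d * ind x\<bar> \<le> harm r + d" by linarith
    qed
    show "integrable (measure_pmf D) (\<lambda>x. measure_pmf.expectation (stopped_step p r \<alpha> x) (Fh r))"
      by (rule integrable_bdd[where B="harm r"]) (rule abs_exp_le[OF Fh_abs])
    show "AE x in measure_pmf D. Fh r x + d * ind x \<le> measure_pmf.expectation (stopped_step p r \<alpha> x) (Fh r)"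
      using AE_measure_pmf[of D]
    proof (rule AE_mp)
      show "AE x in measure_pmf D. x \<in> set_pmf D \<longrightarrow> Fh r x + d * ind x \<le> measure_pmf.expectation (stopped_step p r \<alpha> x) (Fh r)"
        using set_stopped_dist[OF assms] stopped_drift by (auto simp: D_def d_def)
    qed
  qed
  also have "measure_pmf.expectation D (\<lambda>x. Fh r x + d * ind x)
     = measure_pmf.expectation D (Fh r) + d * measure_pmf.expectation D ind"
  proof -
    have i1: "integrable D (Fh r)" by (rule integrable_bdd[OF Fh_abs])
    have i2: "integrable D (\<lambda>x. d * ind x)"
      by (rule integrable_bdd[where B=d]) (use d0 in \<open>simp add: indicator_def\<close>)
    show ?thesis unfolding Bochner_Integration.integral_add[OF i1 i2] by simp
  qed
  finally show ?thesis by (simp add: D_def d_def tail_eq)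
qed

lemma d_pos: "0 < ((real p - 1) - real p * \<alpha>) / (real p * real r)"
  using c_pos p2 r3 by simp

lemma phi_sum:
  assumes "1 \<le> s"
  shows "measure_pmf.expectation (stopped_dist p r \<alpha> s T) (Fh r)
    \<ge> Fh r s + ((real p - 1) - real p * \<alpha>) / (real p * real r) * (\<Sum>t<T. tail_prob p r \<alpha> s t)"
proof (induction T)
  case 0
  then show ?case by simp
next
  case (Suc T)
  then show ?case using phi_step[OF assms, of T] by (simp add: distrib_left)
qed

lemma tail_sum_le:
  assumes "1 \<le> s"
  shows "(\<Sum>t<T. tail_prob p r \<alpha> s t) \<le> harm r / (((real p - 1) - real p * \<alpha>) / (real p * real r))"
proof -
  define d where "d = ((real p - 1) - real p * \<alpha>) / (real p * real r)"
  have d0: "0 < d" using d_pos by (simp add: d_def)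
  have "measure_pmf.expectation (stopped_dist p r \<alpha> s T) (Fh r) \<le> harm r"
    by (rule exp_le_bdd[OF Fh_le Fh_abs])
  then have "d * (\<Sum>t<T. tail_prob p r \<alpha> s t) \<le> harm r"
    using phi_sum[OF assms, of T] Fh_nonneg[of r s] by (simp add: d_def)
  then have "(\<Sum>t<T. tail_prob p r \<alpha> s t) \<le> harm r / d" using d0 by (simp add: pos_le_divide_eq mult.commute)
  then show ?thesis unfolding d_def .
qed

lemma tail_nonneg: "0 \<le> tail_prob p r \<alpha> s t"
  by (simp add: tail_prob_def)

lemma tail_Suc_le: "tail_prob p r \<alpha> s (Suc t) \<le> tail_prob p r \<alpha> s t"
proof -
  define D where "D = stopped_dist p r \<alpha> s t"
  have ib: "\<And>x. \<bar>ind x\<bar> \<le> 1" by (simp add: indicator_def)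
  have "tail_prob p r \<alpha> s (Suc t) = measure_pmf.expectation D (\<lambda>x. measure_pmf.expectation (stopped_step p r \<alpha> x) ind)"
    unfolding tail_eq D_def stopped_dist.simps by (rule integral_bind_pmf_bdd[OF ib])
  also have "\<dots> \<le> measure_pmf.expectation D ind"
  proof (rule integral_mono)
    show "integrable (measure_pmf D) (\<lambda>x. measure_pmf.expectation (stopped_step p r \<alpha> x) ind)"
      by (rule integrable_bdd[where B=1]) (rule abs_exp_le[OF ib])
    show "integrable (measure_pmf D) ind" by (rule integrable_bdd[OF ib])
    fix x
    show "measure_pmf.expectation (stopped_step p r \<alpha> x) ind \<le> ind x"
    proof (cases "real x \<ge> \<alpha> * real r")
      case True
      then show ?thesis by (simp add: stopped_step_def)
    next
      case False
      have "measure_pmf.expectation (stopped_step p r \<alpha> x) ind \<le> 1"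
        by (rule exp_le_bdd[where B'=1]) (simp_all add: indicator_def)
      then show ?thesis using False by simp
    qed
  qed
  finally show ?thesis by (simp add: D_def tail_eq)
qed

lemma tail_mono: "t \<le> T \<Longrightarrow> tail_prob p r \<alpha> s T \<le> tail_prob p r \<alpha> s t"
  using decseqD[OF decseq_SucI[of "tail_prob p r \<alpha> s"]] tail_Suc_le by blast

lemma tail_bound:
  assumes "1 \<le> s"
  shows "(real T + 1) * tail_prob p r \<alpha> s T \<le> harm r / (((real p - 1) - real p * \<alpha>) / (real p * real r))"
proof -
  have "(real T + 1) * tail_prob p r \<alpha> s T = (\<Sum>t<Suc T. tail_prob p r \<alpha> s T)" by simp
  also have "\<dots> \<le> (\<Sum>t<Suc T. tail_prob p r \<alpha> s t)"
    by (rule sum_mono) (use tail_mono in auto)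
  also have "\<dots> \<le> harm r / (((real p - 1) - real p * \<alpha>) / (real p * real r))" by (rule tail_sum_le[OF assms])
  finally show ?thesis .
qed

lemma exp_bound:
  assumes "1 \<le> s"
  shows "exp_hit p r \<alpha> s \<le> ennreal (harm r / (((real p - 1) - real p * \<alpha>) / (real p * real r)))"
  unfolding exp_hit_def suminf_eq_SUP
proof (rule SUP_least)
  fix n
  show "(\<Sum>i<n. ennreal (tail_prob p r \<alpha> s i)) \<le> ennreal (harm r / (((real p - 1) - real p * \<alpha>) / (real p * real r)))"
    using tail_sum_le[OF assms, of n] by (simp add: tail_nonneg sum_nonneg ennreal_leI)
qed

lemma K_bound:
  "harm r / (((real p - 1) - real p * \<alpha>) / (real p * real r))
     \<le> (2 * real p / ((real p - 1) - real p * \<alpha>)) * real r * ln (real r)"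
proof -
  define c where "c = (real p - 1) - real p * \<alpha>"
  have c0: "0 < c" using c_pos by (simp add: c_def)
  have l1: "1 \<le> ln (real r)"
  proof -
    have "exp 1 \<le> real r" using exp_le r3 by linarith
    then show ?thesis using r3 by (simp add: ln_ge_iff)
  qed
  have h: "harm r \<le> 2 * ln (real r)" using harm_le_ln[of r] r3 l1 by simp
  have "harm r / (c / (real p * real r)) = harm r * (real p * real r) / c"
    using c0 p2 r3 by (simp add: field_simps)
  also have "\<dots> \<le> (2 * ln (real r)) * (real p * real r) / c"
    using h c0 p2 by (intro divide_right_mono mult_right_mono) auto
  also have "\<dots> = (2 * real p / c) * real r * ln (real r)" by (simp add: field_simps)
  finally show ?thesis by (simp add: c_def)
qed

end

theorem lemma4p7:
  fixes p :: nat and \<alpha> :: real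
  assumes "prime p" and "odd p"
    and "0 < \<alpha>" and "\<alpha> < (real p - 1) / real p"
  shows "(\<exists>C::real. \<exists>R0::nat. \<forall>r \<ge> R0. \<forall>s \<in> {1..r}.
            exp_hit p r \<alpha> s \<le> ennreal (C * real r * ln (real r)))
       \<and> (\<exists>B::real. \<exists>R0::nat. \<forall>r \<ge> R0. \<forall>s \<in> {1..r}.
            tail_prob p r \<alpha> s (nat \<lfloor>B * real r * ln (real r)\<rfloor>) \<le> 1 / 2)"
proof -
  have p2: "p \<ge> 2" using assms(1) by (rule prime_ge_2_nat)
  define c where "c = (real p - 1) - real p * \<alpha>"
  define C where "C = 2 * real p / c"
  have c0: "0 < c" using assms(4) p2 by (simp add: c_def field_simps)
  have C0: "0 < C" using c0 p2 by (simp add: C_def)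
  have part1: "\<forall>r \<ge> 3. \<forall>s \<in> {1..r}. exp_hit p r \<alpha> s \<le> ennreal (C * real r * ln (real r))"
  proof (intro allI impI ballI)
    fix r s :: nat assume r: "3 \<le> r" and s: "s \<in> {1..r}"
    have "exp_hit p r \<alpha> s \<le> ennreal (harm r / (((real p - 1) - real p * \<alpha>) / (real p * real r)))"
      using exp_bound[OF p2 r assms(3,4)] s by simp
    also have "\<dots> \<le> ennreal (C * real r * ln (real r))"
      using K_bound[OF p2 r assms(3,4)] by (intro ennreal_leI) (simp add: C_def c_def)
    finally show "exp_hit p r \<alpha> s \<le> ennreal (C * real r * ln (real r))" .
  qed
  have part2: "\<forall>r \<ge> 3. \<forall>s \<in> {1..r}. tail_prob p r \<alpha> s (nat \<lfloor>(2 * C) * real r * ln (real r)\<rfloor>) \<le> 1 / 2"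
  proof (intro allI impI ballI)
    fix r s :: nat assume r: "3 \<le> r" and s: "s \<in> {1..r}"
    define L where "L = real r * ln (real r)"
    have L0: "0 < L" using r by (simp add: L_def)
    define T where "T = nat \<lfloor>(2 * C) * real r * ln (real r)\<rfloor>"
    have TL: "(2 * C) * L < real T + 1"
    proof -
      have "(2 * C) * L \<ge> 0" using C0 L0 by simp
      then show ?thesis unfolding T_def L_def by (simp add: mult.assoc)
    qed
    have tb: "(real T + 1) * tail_prob p r \<alpha> s T \<le> C * L"
      using tail_bound[OF p2 r assms(3,4), of s T] K_bound[OF p2 r assms(3,4)] s
      by (simp add: C_def c_def L_def mult.assoc)
    have tn: "0 \<le> tail_prob p r \<alpha> s T" by (simp add: tail_prob_def)
    have "(2 * C * L) * tail_prob p r \<alpha> s T \<le> (real T + 1) * tail_prob p r \<alpha> s T"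
      using TL tn by (intro mult_right_mono) auto
    then have "(2 * C * L) * tail_prob p r \<alpha> s T \<le> C * L" using tb by linarith
    then have "tail_prob p r \<alpha> s T \<le> (C * L) / (2 * C * L)"
      using C0 L0 by (simp add: le_divide_eq mult.commute)
    also have "\<dots> = 1 / 2" using C0 L0 by simp
    finally show "tail_prob p r \<alpha> s (nat \<lfloor>(2 * C) * real r * ln (real r)\<rfloor>) \<le> 1 / 2"
      by (simp add: T_def)
  qed
  show ?thesis using part1 part2 by blast
qed

end
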